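(* Let $p>2$ be prime and let $\mathcal{C}$ be a $\mathbb{Z}_p\mathbb{Z}_{p^2}$-additive code, i.e. a subgroup of $\mathbb{Z}_p^\alpha\times\mathbb{Z}_{p^2}^\beta$. Then the code $C=\Phi(\mathcal{C})\subseteq\mathbb{Z}_p^{\alpha+p\beta}$ is linear over $\mathbb{Z}_p$ if and only if $pP'(\mathbf{u},\mathbf{v})\in\mathcal{C}$ for all $\mathbf{u},\mathbf{v}\in\mathcal{C}$.
   Context: The Gray map $\phi:\mathbb{Z}_{p^2}\to\mathbb{Z}_p^p$ is $\phi(\theta)=\theta''(1,\ldots,1)+\theta'(0,1,\ldots,p-1)$ where $\theta=\theta''p+\theta'$, $\theta',\theta''\in\{0,\ldots,p-1\}$; and $\Phi(\mathbf{x},\mathbf{y})=(\mathbf{x},\phi(y_1),\ldots,\phi(y_\beta))$ for $\mathbf{x}\in\mathbb{Z}_p^\alpha$, $\mathbf{y}\in\mathbb{Z}_{p^2}^\beta$. For $\mathbf{u}=(u_1,\ldots,u_{\alpha+\beta}),\mathbf{v}=(v_1,\ldots,v_{\alpha+\beta})\in\mathbb{Z}_p^\alpha\times\mathbb{Z}_{p^2}^\beta$, write $u_i=u_i''p+u_i'$, $v_i=v_i''p+v_i'$ ($u_i',v_i'\in\{0,\ldots,p-1\}$) for $i>\alpha$. Then $pP'(\mathbf{u},\mathbf{v})\in\mathbb{Z}_p^\alpha\times\mathbb{Z}_{p^2}^\beta$ is the vector whose first $\alpha$ coordinates are $0$ and whose coordinate $i>\alpha$ equals $p(p-1)\in\mathbb{Z}_{p^2}$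 if $u_i'+v_i'\ge p$ and $0$ otherwise. *)

theory Defs
  imports "HOL-Computational_Algebra.Primes"
begin

text \<open>Vectors over Z_m of length n are represented as lists of naturals of length n
  with entries in {0..m-1}.\<close>
definition zvecs :: "nat \<Rightarrow> nat \<Rightarrow> nat list set" where
  "zvecs m n = {x. length x = n \<and> (\<forall>a\<in>set x. a < m)}"

definition add_mod :: "nat \<Rightarrow> nat list \<Rightarrow> nat list \<Rightarrow> nat list" where
  "add_mod m x y = map2 (\<lambda>a b. (a + b) mod m) x y"

definition neg_mod :: "nat \<Rightarrow> nat list \<Rightarrow> nat list" where
  "neg_mod m x = map (\<lambda>a. (m - a) mod m) x"

definition smult_mod :: "nat \<Rightarrow> nat \<Rightarrow> nat list \<Rightarrow> nat list" where
  "smult_mod m c x = map (\<lambda>a. (c * a) mod m) x"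

definition ambient :: "nat \<Rightarrow> nat \<Rightarrow> nat \<Rightarrow> (nat list \<times> nat list) set" where
  "ambient p \<alpha> \<beta> = zvecs p \<alpha> \<times> zvecs (p^2) \<beta>"

definition mix_add :: "nat \<Rightarrow> nat list \<times> nat list \<Rightarrow> nat list \<times> nat list \<Rightarrow> nat list \<times> nat list" where
  "mix_add p u v = (add_mod p (fst u) (fst v), add_mod (p^2) (snd u) (snd v))"

definition mix_neg :: "nat \<Rightarrow> nat list \<times> nat list \<Rightarrow> nat list \<times> nat list" where
  "mix_neg p u = (neg_mod p (fst u), neg_mod (p^2) (snd u))"

definition additive_code :: "nat \<Rightarrow> nat \<Rightarrow> nat \<Rightarrow> (nat list \<times> nat list) set \<Rightarrow> bool" where
  "additive_code p \<alpha> \<beta> C \<longleftrightarrow> C \<subseteq> ambient p \<alpha> \<beta> \<and>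
     (replicate \<alpha> 0, replicate \<beta> 0) \<in> C \<and>
     (\<forall>u\<in>C. \<forall>v\<in>C. mix_add p u v \<in> C) \<and>
     (\<forall>u\<in>C. mix_neg p u \<in> C)"

text \<open>Gray map phi(theta) = theta''(1,...,1) + theta'(0,1,...,p-1) over Z_p,
  where theta = theta'' p + theta'.\<close>
definition gray :: "nat \<Rightarrow> nat \<Rightarrow> nat list" where
  "gray p \<theta> = map (\<lambda>i. (\<theta> div p + (\<theta> mod p) * i) mod p) [0..<p]"

definition Phi :: "nat \<Rightarrow> nat list \<times> nat list \<Rightarrow> nat list" where
  "Phi p u = fst u @ concat (map (gray p) (snd u))"

definition linear_code :: "nat \<Rightarrow> nat \<Rightarrow> nat list set \<Rightarrow> bool" where
  "linear_code p n C \<longleftrightarrow> C \<subseteq> zvecs p n \<and> replicate n 0 \<in> C \<and>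
     (\<forall>x\<in>C. \<forall>y\<in>C. add_mod p x y \<in> C) \<and>
     (\<forall>c<p. \<forall>x\<in>C. smult_mod p c x \<in> C)"

definition pP' :: "nat \<Rightarrow> nat list \<times> nat list \<Rightarrow> nat list \<times> nat list \<Rightarrow> nat list \<times> nat list" where
  "pP' p u v = (replicate (length (fst u)) 0,
     map2 (\<lambda>a b. if a mod p + b mod p \<ge> p then p * (p - 1) else 0) (snd u) (snd v))"

end

theory Submission
  imports Defs "HOL-Number_Theory.Cong"
begin

lemma len_add_mod[simp]: "length (add_mod m x y) = min (length x) (length y)"
  by (simp add: add_mod_def)

lemma nth_add_mod[simp]: "i < length x \<Longrightarrow> i < length y \<Longrightarrow> add_mod m x y ! i = (x!i + y!i) mod m"
  by (simp add: add_mod_def)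

lemma len_neg_mod[simp]: "length (neg_mod m x) = length x"
  by (simp add: neg_mod_def)

lemma nth_neg_mod[simp]: "i < length x \<Longrightarrow> neg_mod m x ! i = (m - x!i) mod m"
  by (simp add: neg_mod_def)

lemma len_smult_mod[simp]: "length (smult_mod m c x) = length x"
  by (simp add: smult_mod_def)

lemma nth_smult_mod[simp]: "i < length x \<Longrightarrow> smult_mod m c x ! i = (c * x!i) mod m"
  by (simp add: smult_mod_def)

lemma zvecs_iff: "x \<in> zvecs m n \<longleftrightarrow> length x = n \<and> (\<forall>i<n. x!i < m)"
  by (auto simp: zvecs_def all_set_conv_all_nth)

lemma add_mod_zvecs: "m > 0 \<Longrightarrow> x \<in> zvecs m n \<Longrightarrow> y \<in> zvecs m n \<Longrightarrow> add_mod m x y \<in> zvecs m n"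
  by (simp add: zvecs_iff)

lemma add_neg_cancel:
  assumes "m > 0" "x \<in> zvecs m n" "y \<in> zvecs m n"
  shows "add_mod m (add_mod m x y) (neg_mod m x) = y"
proof (rule nth_equalityI)
  show "length (add_mod m (add_mod m x y) (neg_mod m x)) = length y" using assms by (simp add: zvecs_iff)
  fix i assume "i < length (add_mod m (add_mod m x y) (neg_mod m x))"
  then have i: "i < n" using assms by (simp add: zvecs_iff)
  have xi: "x!i < m" and yi: "y!i < m" using assms i by (auto simp: zvecs_iff)
  have "((x!i + y!i) mod m + (m - x!i) mod m) mod m = (x!i + y!i + (m - x!i)) mod m"
    by (simp add: mod_add_eq)
  also have "x!i + y!i + (m - x!i) = y!i + m" using xi by simp
  also have "(y!i + m) mod m = y!i" using yi by simp
  finally show "add_mod m (add_mod m x y) (neg_mod m x) ! i = y ! i"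
    using assms i by (simp add: zvecs_iff)
qed

lemma smult_suc:
  assumes "x \<in> zvecs m n"
  shows "smult_mod m (Suc c) x = add_mod m x (smult_mod m c x)"
proof (rule nth_equalityI)
  show "length (smult_mod m (Suc c) x) = length (add_mod m x (smult_mod m c x))" by simp
  fix i assume "i < length (smult_mod m (Suc c) x)"
  then show "smult_mod m (Suc c) x ! i = add_mod m x (smult_mod m c x) ! i"
    by (simp add: mod_add_right_eq)
qed

lemma smult_zero: "smult_mod m 0 x = replicate (length x) 0"
  by (simp add: smult_mod_def map_replicate_const)

lemma len_gray[simp]: "length (gray p t) = p"
  by (simp add: gray_def)

lemma nth_gray[simp]: "i < p \<Longrightarrow> gray p t ! i = (t div p + (t mod p) * i) mod p"
  by (simp add: gray_def)

lemma gray_lt: "p > 0 \<Longrightarrow> a \<in> set (gray p t) \<Longrightarrow> a < p"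
  by (auto simp: gray_def)

lemma gray_zero: "gray p 0 = replicate p 0"
  by (simp add: gray_def map_replicate_const)

lemma gray_mod:
  assumes "p > 0"
  shows "gray p (t mod p^2) = gray p t"
proof -
  have e: "t mod p^2 = t mod p + p * (t div p mod p)"
    by (simp add: power2_eq_square mod_mult2_eq)
  have m: "t mod p^2 mod p = t mod p" unfolding e by simp
  have d: "t mod p^2 div p = t div p mod p" unfolding e using assms by simp
  show ?thesis
    unfolding gray_def m d by (simp add: mod_add_left_eq)
qed

lemma gray_add_scalar:
  fixes a b N p i :: nat
  assumes p: "p > 0" and i: "i < p"
    and that: "N = a + b + (if a mod p + b mod p \<ge> p then p * (p - 1) else 0)"
  shows "((a div p + a mod p * i) mod p + (b div p + b mod p * i) mod p) mod p
    = (N div p + N mod p * i) mod p"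
proof -
  define a1 a0 b1 b0 where "a1 = a div p" "a0 = a mod p" "b1 = b div p" "b0 = b mod p"
  have a: "a = a1 * p + a0" unfolding a1_a0_b1_b0_def by (metis div_mult_mod_eq)
  have b: "b = b1 * p + b0" unfolding a1_a0_b1_b0_def by (metis div_mult_mod_eq)
  have a0: "a0 < p" "b0 < p" using p by (simp_all add: a1_a0_b1_b0_def)
  have L: "((a div p + a mod p * i) mod p + (b div p + b mod p * i) mod p) mod p
     = (a1 + b1 + (a0 + b0) * i) mod p"
  proof -
    have "((a div p + a mod p * i) mod p + (b div p + b mod p * i) mod p) mod p
       = (a1 + a0 * i + (b1 + b0 * i)) mod p"
      unfolding a1_a0_b1_b0_def[symmetric] by (rule mod_add_eq)
    also have "a1 + a0 * i + (b1 + b0 * i) = a1 + b1 + (a0 + b0) * i" by (simp add: algebra_simps)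
    finally show ?thesis .
  qed
  show ?thesis
  proof (cases "a0 + b0 \<ge> p")
    case True
    have N0: "N = a1*p + b1*p + a0 + b0 + p*(p-1)"
      using that True a b unfolding a1_a0_b1_b0_def[symmetric] by simp
    have pp: "p * (p - 1) + p = p * p" using p by (cases p) auto
    have dd: "(a1+b1+p)*p = a1*p + b1*p + p*p" by (simp add: add_mult_distrib)
    have N: "N = (a1 + b1 + p) * p + (a0 + b0 - p)"
      using N0 pp dd True by linarith
    define r where "r = a0 + b0 - p"
    have r: "r < p" using a0 True unfolding r_def by linarith
    have Nr: "N = r + (a1 + b1 + p) * p" using N unfolding r_def by simp
    have Nm: "N mod p = a0 + b0 - p" and Nd: "N div p = a1 + b1 + p"
      unfolding r_def[symmetric] Nr using r by simp_all
    define X where "X = a1 + b1 + (a0 + b0 - p) * i"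
    have e1: "a1 + b1 + (a0 + b0) * i = X + p * i"
    proof -
      have rr: "a0 + b0 = r + p" using True unfolding r_def by simp
      show ?thesis unfolding X_def r_def[symmetric] rr by (simp add: add_mult_distrib)
    qed
    have e2: "N div p + N mod p * i = X + p * 1" unfolding Nm Nd X_def by simp
    show ?thesis unfolding L e1 e2 by simp
  next
    case False
    have N: "N = (a1 + b1) * p + (a0 + b0)"
      using that False a b unfolding a1_a0_b1_b0_def[symmetric] by (simp add: algebra_simps)
    define s where "s = a0 + b0"
    have lt: "s < p" using False unfolding s_def by simp
    have Ns: "N = s + (a1 + b1) * p" using N unfolding s_def by simp
    have Nm: "N mod p = a0 + b0" and Nd: "N div p = a1 + b1"
      unfolding s_def[symmetric] Ns using lt by simp_all
    show ?thesis unfolding L Nm Nd by (rule refl)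
  qed
qed

lemma gray_add:
  assumes p: "p > 0"
  shows "add_mod p (gray p a) (gray p b) =
    gray p (((a + b) mod p^2 + (if a mod p + b mod p \<ge> p then p * (p - 1) else 0)) mod p^2)"
proof -
  define N where "N = a + b + (if a mod p + b mod p \<ge> p then p * (p - 1) else 0)"
  have "((a + b) mod p^2 + (if a mod p + b mod p \<ge> p then p * (p - 1) else 0)) mod p^2 = N mod p^2"
    unfolding N_def by (rule mod_add_left_eq)
  then have e: "gray p (((a + b) mod p^2 + (if a mod p + b mod p \<ge> p then p * (p - 1) else 0)) mod p^2) = gray p N"
    using gray_mod[OF p] by simp
  show ?thesis unfolding e
  proof (rule nth_equalityI)
    show "length (add_mod p (gray p a) (gray p b)) = length (gray p N)" by simp
    fix i assume "i < length (add_mod p (gray p a) (gray p b))"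
    then have i: "i < p" by simp
    have "add_mod p (gray p a) (gray p b) ! i = ((gray p a)!i + (gray p b)!i) mod p"
      using i by (intro nth_add_mod) simp_all
    also have "... = gray p N ! i" unfolding nth_gray[OF i] by (rule gray_add_scalar[OF p i N_def])
    finally show "add_mod p (gray p a) (gray p b) ! i = gray p N ! i" .
  qed
qed

lemma add_mod_append:
  "length x1 = length y1 \<Longrightarrow> add_mod m (x1 @ x2) (y1 @ y2) = add_mod m x1 y1 @ add_mod m x2 y2"
  by (simp add: add_mod_def)

lemma concat_gray_add:
  "length xs = length ys \<Longrightarrow>
   add_mod p (concat (map (gray p) xs)) (concat (map (gray p) ys)) =
   concat (map2 (\<lambda>a b. add_mod p (gray p a) (gray p b)) xs ys)"
proof (induction xs arbitrary: ys)
  case Nil then show ?case by (simp add: add_mod_def)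
next
  case (Cons a xs)
  then obtain b ys' where ys: "ys = b # ys'" by (cases ys) auto
  show ?case using Cons ys by (simp add: add_mod_append)
qed

lemma concat_gray_inj:
  "length xs = length ys \<Longrightarrow> concat (map (gray p) xs) = concat (map (gray p) ys) \<Longrightarrow>
   map (gray p) xs = map (gray p) ys"
proof (induction xs arbitrary: ys)
  case Nil then show ?case by simp
next
  case (Cons a xs)
  then obtain b ys' where ys: "ys = b # ys'" by (cases ys) auto
  show ?case using Cons ys by (auto simp: append_eq_append_conv)
qed

lemma gray_inj:
  assumes p: "p \<ge> 2" and a: "a < p^2" and b: "b < p^2" and e: "gray p a = gray p b"
  shows "a = b"
proof -
  have "gray p a ! 0 = gray p b ! 0" "gray p a ! 1 = gray p b ! 1" using e by simp_all
  then have e0: "(a div p) mod p = (b div p) mod p"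
    and e1: "(a div p + a mod p) mod p = (b div p + b mod p) mod p" using p by simp_all
  have "a div p < p" "b div p < p" using a b p
    by (simp_all add: less_mult_imp_div_less power2_eq_square)
  then have d: "a div p = b div p" using e0 by simp
  have "[b div p + a mod p = b div p + b mod p] (mod p)"
    using e1 unfolding d cong_def .
  then have "[a mod p = b mod p] (mod p)"
    by (rule cong_add_lcancel_nat[THEN iffD1])
  then have "a mod p mod p = b mod p mod p" unfolding cong_def .
  then have "a mod p = b mod p" by simp
  with d show ?thesis by (metis div_mult_mod_eq)
qed

lemma len_concat_gray: "length (concat (map (gray p) ys)) = p * length ys"
  by (induction ys) auto

lemma concat_gray_zero: "concat (map (gray p) (replicate n 0)) = replicate (p * n) 0"
  by (induction n) (auto simp: gray_zero replicate_add[symmetric])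

lemma set_concat_gray: "p > 0 \<Longrightarrow> a \<in> set (concat (map (gray p) ys)) \<Longrightarrow> a < p"
  using gray_lt by auto

lemma Phi_zvecs:
  assumes p: "p > 0" and u: "u \<in> ambient p \<alpha> \<beta>"
  shows "Phi p u \<in> zvecs p (\<alpha> + p * \<beta>)"
  using u set_concat_gray[OF p] unfolding Phi_def ambient_def zvecs_def
  by (auto simp: len_concat_gray)

lemma Phi_zero: "Phi p (replicate \<alpha> 0, replicate \<beta> 0) = replicate (\<alpha> + p * \<beta>) 0"
  unfolding Phi_def fst_conv snd_conv concat_gray_zero by (simp add: replicate_add)

lemma Phi_inj:
  assumes p: "p \<ge> 2" and u: "u \<in> ambient p \<alpha> \<beta>" and v: "v \<in> ambient p \<alpha> \<beta>"
    and e: "Phi p u = Phi p v"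
  shows "u = v"
proof -
  have lu: "length (fst u) = \<alpha>" "length (snd u) = \<beta>" "\<forall>a\<in>set (snd u). a < p^2"
    using u by (auto simp: ambient_def zvecs_def)
  have lv: "length (fst v) = \<alpha>" "length (snd v) = \<beta>" "\<forall>a\<in>set (snd v). a < p^2"
    using v by (auto simp: ambient_def zvecs_def)
  from e have "fst u = fst v \<and> concat (map (gray p) (snd u)) = concat (map (gray p) (snd v))"
    unfolding Phi_def using lu lv by (simp add: append_eq_append_conv)
  then have f: "fst u = fst v" and c: "concat (map (gray p) (snd u)) = concat (map (gray p) (snd v))"
    by auto
  have m: "map (gray p) (snd u) = map (gray p) (snd v)"
    using concat_gray_inj[OF _ c] lu lv by simp
  have "inj_on (gray p) (set (snd u) \<union> set (snd v))"
    using gray_inj[OF p] lu lv by (auto intro!: inj_onI)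
  then have "snd u = snd v" using m inj_on_map_eq_map by blast
  with f show ?thesis by (simp add: prod_eq_iff)
qed

lemma pP'_ambient:
  assumes p: "p > 0" and u: "u \<in> ambient p \<alpha> \<beta>" and v: "v \<in> ambient p \<alpha> \<beta>"
  shows "pP' p u v \<in> ambient p \<alpha> \<beta>"
proof -
  have "p * (p - 1) < p^2" using p by (simp add: power2_eq_square)
  moreover have "0 < p^2" using p by simp
  ultimately show ?thesis using u v
    by (auto simp: ambient_def zvecs_iff pP'_def mem_Times_iff)
qed

lemma mix_add_ambient:
  assumes p: "p > 0" and u: "u \<in> ambient p \<alpha> \<beta>" and v: "v \<in> ambient p \<alpha> \<beta>"
  shows "mix_add p u v \<in> ambient p \<alpha> \<beta>"
  using u v p add_mod_zvecs[of p] add_mod_zvecs[of "p^2"] unfolding ambient_def mix_add_def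
  by auto

lemma Phi_add:
  assumes p: "p > 0" and u: "u \<in> ambient p \<alpha> \<beta>" and v: "v \<in> ambient p \<alpha> \<beta>"
  shows "add_mod p (Phi p u) (Phi p v) = Phi p (mix_add p (mix_add p u v) (pP' p u v))"
proof -
  obtain fu su fv sv where uu: "u = (fu, su)" and vv: "v = (fv, sv)" by (cases u, cases v) auto
  have fu: "fu \<in> zvecs p \<alpha>" and fv: "fv \<in> zvecs p \<alpha>" and su: "su \<in> zvecs (p^2) \<beta>"
    and sv: "sv \<in> zvecs (p^2) \<beta>" using u v uu vv by (auto simp: ambient_def)
  have lens: "length fu = \<alpha>" "length fv = \<alpha>" "length su = \<beta>" "length sv = \<beta>"
    using fu fv su sv by (simp_all add: zvecs_iff)
  have f: "add_mod p (add_mod p fu fv) (replicate \<alpha> 0) = add_mod p fu fv"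
  proof (rule nth_equalityI)
    show "length (add_mod p (add_mod p fu fv) (replicate \<alpha> 0)) = length (add_mod p fu fv)"
      using fu fv by (simp add: zvecs_iff)
    fix i assume "i < length (add_mod p (add_mod p fu fv) (replicate \<alpha> 0))"
    then show "add_mod p (add_mod p fu fv) (replicate \<alpha> 0) ! i = add_mod p fu fv ! i"
      using fu fv by (simp add: zvecs_iff)
  qed
  define g where "g = (\<lambda>a b. if a mod p + b mod p \<ge> p then p * (p - 1) else (0::nat))"
  have s: "map (gray p) (add_mod (p^2) (add_mod (p^2) su sv) (map2 g su sv))
     = map2 (\<lambda>a b. add_mod p (gray p a) (gray p b)) su sv"
  proof (rule nth_equalityI)
    show "length (map (gray p) (add_mod (p^2) (add_mod (p^2) su sv) (map2 g su sv))) =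
      length (map2 (\<lambda>a b. add_mod p (gray p a) (gray p b)) su sv)"
      using su sv by (simp add: zvecs_iff)
    fix i assume "i < length (map (gray p) (add_mod (p^2) (add_mod (p^2) su sv) (map2 g su sv)))"
    then have i: "i < length su" "i < length sv" using su sv by (simp_all add: zvecs_iff)
    have "map (gray p) (add_mod (p^2) (add_mod (p^2) su sv) (map2 g su sv)) ! i
      = gray p (((su!i + sv!i) mod p^2 + g (su!i) (sv!i)) mod p^2)"
      using i by simp
    also have "... = add_mod p (gray p (su!i)) (gray p (sv!i))"
      unfolding g_def by (rule gray_add[OF p, symmetric])
    also have "... = map2 (\<lambda>a b. add_mod p (gray p a) (gray p b)) su sv ! i"
      using i by simp
    finally show "map (gray p) (add_mod (p^2) (add_mod (p^2) su sv) (map2 g su sv)) ! i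
      = map2 (\<lambda>a b. add_mod p (gray p a) (gray p b)) su sv ! i" .
  qed
  show ?thesis
    unfolding uu vv Phi_def mix_add_def pP'_def fst_conv snd_conv g_def[symmetric]
    by (simp add: lens add_mod_append f s concat_gray_add)
qed

theorem lemma4:
  fixes p \<alpha> \<beta> :: nat and C :: "(nat list \<times> nat list) set"
  assumes "prime p" and "p > 2" and "additive_code p \<alpha> \<beta> C"
  shows "linear_code p (\<alpha> + p * \<beta>) (Phi p ` C) \<longleftrightarrow> (\<forall>u\<in>C. \<forall>v\<in>C. pP' p u v \<in> C)"
proof -
  have p0: "p > 0" and p2: "p \<ge> 2" using assms(2) by auto
  have CA: "C \<subseteq> ambient p \<alpha> \<beta>" and C0: "(replicate \<alpha> 0, replicate \<beta> 0) \<in> C"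
    and Cadd: "\<And>u v. u \<in> C \<Longrightarrow> v \<in> C \<Longrightarrow> mix_add p u v \<in> C"
    and Cneg: "\<And>u. u \<in> C \<Longrightarrow> mix_neg p u \<in> C"
    using assms(3) unfolding additive_code_def by auto
  show ?thesis
  proof
    assume lin: "linear_code p (\<alpha> + p * \<beta>) (Phi p ` C)"
    show "\<forall>u\<in>C. \<forall>v\<in>C. pP' p u v \<in> C"
    proof (intro ballI)
      fix u v assume u: "u \<in> C" and v: "v \<in> C"
      have ua: "u \<in> ambient p \<alpha> \<beta>" and va: "v \<in> ambient p \<alpha> \<beta>" using u v CA by auto
      define S where "S = mix_add p u v"
      define P where "P = pP' p u v"
      have SC: "S \<in> C" unfolding S_def using Cadd u v by simp
      have Sa: "S \<in> ambient p \<alpha> \<beta>" using SC CA by auto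
      have Pa: "P \<in> ambient p \<alpha> \<beta>" unfolding P_def using pP'_ambient[OF p0 ua va] .
      have "add_mod p (Phi p u) (Phi p v) \<in> Phi p ` C"
        using lin u v unfolding linear_code_def by auto
      then obtain w where w: "w \<in> C" and we: "Phi p w = add_mod p (Phi p u) (Phi p v)" by auto
      have "Phi p w = Phi p (mix_add p S P)"
        unfolding we S_def P_def by (rule Phi_add[OF p0 ua va])
      then have wSP: "w = mix_add p S P"
        using Phi_inj[OF p2] w CA mix_add_ambient[OF p0 Sa Pa] by blast
      have z: "fst S \<in> zvecs p \<alpha>" "snd S \<in> zvecs (p^2) \<beta>" "fst P \<in> zvecs p \<alpha>" "snd P \<in> zvecs (p^2) \<beta>"
        using Sa Pa by (auto simp: ambient_def mem_Times_iff)
      have "mix_add p w (mix_neg p S) = P"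
        unfolding wSP mix_add_def mix_neg_def fst_conv snd_conv
        using add_neg_cancel[OF p0 z(1) z(3)] add_neg_cancel[OF _ z(2) z(4)] p0
        by (simp add: prod_eq_iff)
      moreover have "mix_add p w (mix_neg p S) \<in> C" using Cadd Cneg w SC by blast
      ultimately show "pP' p u v \<in> C" unfolding P_def by simp
    qed
  next
    assume H: "\<forall>u\<in>C. \<forall>v\<in>C. pP' p u v \<in> C"
    have sub: "Phi p ` C \<subseteq> zvecs p (\<alpha> + p * \<beta>)" using Phi_zvecs[OF p0] CA by blast
    have zero: "replicate (\<alpha> + p * \<beta>) 0 \<in> Phi p ` C"
      using C0 Phi_zero[of p \<alpha> \<beta>] by (metis image_eqI)
    have add: "add_mod p x y \<in> Phi p ` C" if x: "x \<in> Phi p ` C" and y: "y \<in> Phi p ` C" for x y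
    proof -
      obtain u where u: "u \<in> C" "x = Phi p u" using x by auto
      obtain v where v: "v \<in> C" "y = Phi p v" using y by auto
      have "add_mod p x y = Phi p (mix_add p (mix_add p u v) (pP' p u v))"
        unfolding u(2) v(2) using Phi_add[OF p0] u(1) v(1) CA by blast
      moreover have "mix_add p (mix_add p u v) (pP' p u v) \<in> C"
        using Cadd H u(1) v(1) by blast
      ultimately show ?thesis by blast
    qed
    have sm: "smult_mod p c x \<in> Phi p ` C" if x: "x \<in> Phi p ` C" for c x
    proof (induction c)
      case 0
      have "length x = \<alpha> + p * \<beta>" using x sub by (auto simp: zvecs_def)
      then show ?case using zero by (simp add: smult_zero)
    next
      case (Suc c)
      have "x \<in> zvecs p (\<alpha> + p * \<beta>)" using x sub by auto
      then show ?case using smult_suc add[OF x Suc] by simp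
    qed
    show "linear_code p (\<alpha> + p * \<beta>) (Phi p ` C)"
      unfolding linear_code_def using sub zero add sm by blast
  qed
qed

end
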